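(* Let $T>0$, $n_0>0$, and let $X(t)$ be a zero-mean Gaussian process on $[0,T]$ whose autocorrelation $R_X(t_1,t_2)=\mathbb{E}[X(t_1)X(t_2)]$ is a continuous, symmetric, positive-definite kernel on $[0,T]^2$, with Mercer expansion on $[0,T]$ given by eigenpairs $(\lambda_k,\phi_k)_{k\ge 1}$, i.e. $\lambda_k\phi_k(t_1)=\int_0^T R_X(t_1,t_2)\phi_k(t_2)\,\mathrm{d}t_2$ for all $k\ge1$, with $\int_0^T\phi_i(t)\phi_j(t)\,\mathrm{d}t=\delta_{ij}$. Let $Y(t)=X(t)+N(t)$, where $N(t)$ is additive white Gaussian noise of power spectral density $n_0/2$, independent of $X$. Then the finite-time mutual information $I(T)$ between $X$ and $Y$ within the observation window $[0,T]$ is $$I(T)=\frac12\sum_{k=1}^{\infty}\log\left(1+\frac{\lambda_k}{n_0/2}\right).$$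
   Context: The finite-time mutual information is defined by sampling: for $n\ge1$ take sampling instants $t_i=(i-1)T/n$, $1\le i\le n$, and let $I(t_1^n)=I(\boldsymbol X(t_1^n);\boldsymbol Y(t_1^n))$ be the mutual information between the sample vectors $(X(t_1),\dots,X(t_n))$ and $(Y(t_1),\dots,Y(t_n))$; then $I(T)=\lim_{n\to\infty}I(t_1^n)$. Since white noise has infinite pointwise power, its samples are taken after passing $N(t)$ through a rectangular filter of width $T/n$ and gain $n/T$, so that the noise samples are i.i.d. zero-mean Gaussian with variance $\frac{n_0}{2}\cdot\frac{n}{T}$, independent of $X$. Thus $I(t_1^n)=\frac12\log\det\big(\mathbf I_n+\frac{2T}{n n_0}\mathbf K_X\big)$ with $(\mathbf K_X)_{ij}=R_X(t_i,t_j)$. Logarithms are natural (information in nats). *)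

theory Defs
  imports "HOL-Analysis.Analysis" "Jordan_Normal_Form.Determinant"
begin

text \<open>Sampling instants: the (i+1)-th instant t_(i+1) = i T / n, for i = 0, ..., n-1.\<close>
definition sample_time :: "real \<Rightarrow> nat \<Rightarrow> nat \<Rightarrow> real" where
  "sample_time T n i = real i * T / real n"

definition sample_cov :: "(real \<Rightarrow> real \<Rightarrow> real) \<Rightarrow> real \<Rightarrow> nat \<Rightarrow> real mat" where
  "sample_cov R T n = mat n n (\<lambda>(i, j). R (sample_time T n i) (sample_time T n j))"

definition sampled_MI :: "(real \<Rightarrow> real \<Rightarrow> real) \<Rightarrow> real \<Rightarrow> real \<Rightarrow> nat \<Rightarrow> real" where
  "sampled_MI R T n0 n =
     1/2 * ln (det (1\<^sub>m n + (2 * T / (real n * n0)) \<cdot>\<^sub>m sample_cov R T n))"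

end

theory Submission
  imports Defs
begin


lemma sylvester:
  fixes U W :: "real mat"
  assumes U: "U \<in> carrier_mat n m" and W: "W \<in> carrier_mat m n"
  shows "det (1\<^sub>m n + U * W) = det (1\<^sub>m m + W * U)"
proof -
  let ?M = "four_block_mat (1\<^sub>m n) (- U) W (1\<^sub>m m)"
  have WU: "W * U \<in> carrier_mat m m" using U W by auto
  have UW: "U * W \<in> carrier_mat n n" using U W by auto
  have e1: "?M = four_block_mat (1\<^sub>m n) (0\<^sub>m n m) W (1\<^sub>m m) *
                 four_block_mat (1\<^sub>m n) (- U) (0\<^sub>m m n) (1\<^sub>m m + W * U)"
  proof -
    have "four_block_mat (1\<^sub>m n) (0\<^sub>m n m) W (1\<^sub>m m) *
                 four_block_mat (1\<^sub>m n) (- U) (0\<^sub>m m n) (1\<^sub>m m + W * U)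
       = four_block_mat (1\<^sub>m n * 1\<^sub>m n + 0\<^sub>m n m * 0\<^sub>m m n) (1\<^sub>m n * (- U) + 0\<^sub>m n m * (1\<^sub>m m + W * U))
           (W * 1\<^sub>m n + 1\<^sub>m m * 0\<^sub>m m n) (W * (- U) + 1\<^sub>m m * (1\<^sub>m m + W * U))"
      by (rule mult_four_block_mat, insert U W, auto)
    also have "\<dots> = ?M"
    proof -
      have a: "W * (- U) + 1\<^sub>m m * (1\<^sub>m m + W * U) = 1\<^sub>m m"
        using U W WU by (simp add: mult_minus_distrib_mat[symmetric]) (rule eq_matI, insert WU, auto)
      show ?thesis using U W a by (auto simp: )
    qed
    finally show ?thesis by simp
  qed
  have e2: "?M = four_block_mat (1\<^sub>m n + U * W) (- U) (0\<^sub>m m n) (1\<^sub>m m) *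
                 four_block_mat (1\<^sub>m n) (0\<^sub>m n m) W (1\<^sub>m m)"
  proof -
    have "four_block_mat (1\<^sub>m n + U * W) (- U) (0\<^sub>m m n) (1\<^sub>m m) *
                 four_block_mat (1\<^sub>m n) (0\<^sub>m n m) W (1\<^sub>m m)
       = four_block_mat ((1\<^sub>m n + U * W) * 1\<^sub>m n + (- U) * W) ((1\<^sub>m n + U * W) * 0\<^sub>m n m + (- U) * 1\<^sub>m m)
           (0\<^sub>m m n * 1\<^sub>m n + 1\<^sub>m m * W) (0\<^sub>m m n * 0\<^sub>m n m + 1\<^sub>m m * 1\<^sub>m m)"
      by (rule mult_four_block_mat, insert U W UW, auto)
    also have "\<dots> = ?M"
    proof -
      have a: "(1\<^sub>m n + U * W) * 1\<^sub>m n + (- U) * W = 1\<^sub>m n"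
        using U W UW by (simp add: ) (rule eq_matI, insert UW U W, auto)
      show ?thesis using U W UW a by (auto simp: )
    qed
    finally show ?thesis by simp
  qed
  have "det ?M = det (1\<^sub>m m + W * U)"
    unfolding e1 
    apply (subst det_mult[of _ "n+m"])
    using U W WU
    by (auto simp: det_four_block_mat_upper_right_zero[of _ n _ m] det_four_block_mat_lower_left_zero[of _ n _ m])
  moreover have "det ?M = det (1\<^sub>m n + U * W)"
    unfolding e2 
    apply (subst det_mult[of _ "n+m"])
    using U W UW
    by (auto simp: det_four_block_mat_upper_right_zero[of _ n _ m] det_four_block_mat_lower_left_zero[of _ n _ m])
  ultimately show ?thesis by simp
qed

definition outer :: "nat \<Rightarrow> (nat \<Rightarrow> real) \<Rightarrow> real mat" where
  "outer n w = mat n n (\<lambda>(i,j). w i * w j)"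

definition geI :: "nat \<Rightarrow> real mat \<Rightarrow> bool" where
  "geI n Q \<longleftrightarrow> Q \<in> carrier_mat n n \<and>
     (\<forall>y. (\<Sum>i=0..<n. (y i)\<^sup>2) \<le> (\<Sum>i=0..<n. \<Sum>j=0..<n. y i * Q $$ (i,j) * y j))"

lemma geI_det_nz:
  assumes "geI n Q" shows "det Q \<noteq> 0"
proof
  assume d: "det Q = 0"
  have Q: "Q \<in> carrier_mat n n" using assms geI_def by auto
  obtain v where v: "v \<in> carrier_vec n" "v \<noteq> 0\<^sub>v n" "Q *\<^sub>v v = 0\<^sub>v n"
    using d det_0_iff_vec_prod_zero[OF Q] by auto
  have row0: "(\<Sum>j=0..<n. Q $$ (i,j) * v $ j) = 0" if i: "i < n" for i
  proof -
    have "(Q *\<^sub>v v) $ i = 0" using v(3) i by simp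
    then show ?thesis using Q v(1) i by (simp add: scalar_prod_def row_def)
  qed
  have "(\<Sum>i=0..<n. (v $ i)\<^sup>2) \<le> (\<Sum>i=0..<n. \<Sum>j=0..<n. v $ i * Q $$ (i,j) * v $ j)"
    using assms geI_def by auto
  also have "\<dots> = (\<Sum>i=0..<n. v $ i * (\<Sum>j=0..<n. Q $$ (i,j) * v $ j))"
    by (simp add: sum_distrib_left mult.assoc)
  also have "\<dots> = 0" using row0 by simp
  finally have "(\<Sum>i=0..<n. (v $ i)\<^sup>2) \<le> 0" .
  moreover have "0 \<le> (\<Sum>i=0..<n. (v $ i)\<^sup>2)" by (intro sum_nonneg) auto
  ultimately have "(\<Sum>i=0..<n. (v $ i)\<^sup>2) = 0" by linarith
  then have "\<forall>i\<in>{0..<n}. (v $ i)\<^sup>2 = 0"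
    by (subst (asm) sum_nonneg_eq_0_iff) auto
  then have "v = 0\<^sub>v n" using v(1) by (intro eq_vecI) auto
  then show False using v(2) by simp
qed

lemma rank1:
  assumes g: "geI n Q"
  shows "geI n (Q + outer n w) \<and> (\<exists>q. 0 \<le> q \<and> q \<le> (\<Sum>i=0..<n. (w i)\<^sup>2) \<and> det (Q + outer n w) = det Q * (1 + q))"
proof -
  have Q: "Q \<in> carrier_mat n n" using g geI_def by auto
  have O: "outer n w \<in> carrier_mat n n" by (simp add: outer_def)
  have "Q \<in> Units (ring_mat TYPE(real) n undefined)"
    by (rule det_non_zero_imp_unit[OF Q geI_det_nz[OF g]])
  then obtain Qi where Qi: "Qi \<in> carrier_mat n n" "Q * Qi = 1\<^sub>m n"
    unfolding Units_def ring_mat_simps by auto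
  define y where "y i = (\<Sum>k=0..<n. Qi $$ (i,k) * w k)" for i
  have Qy: "(\<Sum>j=0..<n. Q $$ (i,j) * y j) = w i" if i: "i < n" for i
  proof -
    have "(\<Sum>j=0..<n. Q $$ (i,j) * y j) = (\<Sum>j=0..<n. \<Sum>k=0..<n. Q $$ (i,j) * Qi $$ (j,k) * w k)"
      unfolding y_def by (simp add: sum_distrib_left mult.assoc)
    also have "\<dots> = (\<Sum>k=0..<n. \<Sum>j=0..<n. Q $$ (i,j) * Qi $$ (j,k) * w k)"
      by (rule sum.swap)
    also have "\<dots> = (\<Sum>k=0..<n. (\<Sum>j=0..<n. Q $$ (i,j) * Qi $$ (j,k)) * w k)"
      by (simp add: sum_distrib_right)
    also have "\<dots> = (\<Sum>k=0..<n. (Q * Qi) $$ (i,k) * w k)"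
      using Q Qi(1) i by (intro sum.cong refl) (simp add: scalar_prod_def row_def col_def)
    also have "\<dots> = (\<Sum>k=0..<n. (if i = k then w k else 0))"
      using i by (intro sum.cong refl) (subst Qi(2), simp)
    also have "\<dots> = w i" using i by simp
    finally show ?thesis .
  qed
  define U where "U = mat n 1 (\<lambda>(i,j). y i)"
  define Wm where "Wm = mat 1 n (\<lambda>(i,j). w j)"
  have U: "U \<in> carrier_mat n 1" and Wm: "Wm \<in> carrier_mat 1 n" by (auto simp: U_def Wm_def)
  have QU: "Q * U = mat n 1 (\<lambda>(i,j). w i)"
  proof (rule eq_matI)
    fix i j assume i: "i < dim_row (mat n 1 (\<lambda>(i,j). w i))" and j: "j < dim_col (mat n 1 (\<lambda>(i,j). w i))"
    then have "i < n" "j = 0" by auto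
    then show "(Q * U) $$ (i, j) = mat n 1 (\<lambda>(i,j). w i) $$ (i, j)"
      using Q Qy[of i] by (simp add: U_def scalar_prod_def row_def col_def)
  qed (use Q in \<open>auto simp: U_def\<close>)
  have QUW: "Q * U * Wm = outer n w"
    unfolding QU by (rule eq_matI) (auto simp: Wm_def outer_def scalar_prod_def row_def col_def)
  have eq: "Q + outer n w = Q * (1\<^sub>m n + U * Wm)"
  proof -
    have UW: "U * Wm \<in> carrier_mat n n" using U Wm by auto
    have "Q * (1\<^sub>m n + U * Wm) = Q * 1\<^sub>m n + Q * (U * Wm)"
      by (rule mult_add_distrib_mat[OF Q one_carrier_mat UW])
    also have "\<dots> = Q + Q * U * Wm" using Q U Wm by simp
    finally show ?thesis using QUW by simp
  qed
  define q where "q = (\<Sum>l=0..<n. w l * y l)"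
  have WU: "1\<^sub>m 1 + Wm * U = mat 1 1 (\<lambda>_. 1 + q)"
    by (rule eq_matI) (auto simp: Wm_def U_def q_def scalar_prod_def row_def col_def)
  have det: "det (Q + outer n w) = det Q * (1 + q)"
  proof -
    have UW: "1\<^sub>m n + U * Wm \<in> carrier_mat n n" using U Wm by auto
    have "det (Q + outer n w) = det Q * det (1\<^sub>m n + U * Wm)"
      unfolding eq by (rule det_mult[OF Q UW])
    also have "det (1\<^sub>m n + U * Wm) = det (1\<^sub>m 1 + Wm * U)" by (rule sylvester[OF U Wm])
    also have "\<dots> = 1 + q" unfolding WU by (subst det_single) auto
    finally show ?thesis .
  qed
  have gy: "(\<Sum>i=0..<n. (y i)\<^sup>2) \<le> (\<Sum>i=0..<n. \<Sum>j=0..<n. y i * Q $$ (i,j) * y j)"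
    using g geI_def by auto
  also have "\<dots> = (\<Sum>i=0..<n. y i * (\<Sum>j=0..<n. Q $$ (i,j) * y j))"
    by (simp add: sum_distrib_left mult.assoc)
  also have "\<dots> = q" unfolding q_def using Qy by (simp add: mult.commute)
  finally have qy: "(\<Sum>i=0..<n. (y i)\<^sup>2) \<le> q" .
  have q0: "0 \<le> q" using qy sum_nonneg[of "{0..<n}" "\<lambda>i. (y i)\<^sup>2"] by auto
  have "0 \<le> (\<Sum>i=0..<n. (w i - y i)\<^sup>2)" by (intro sum_nonneg) auto
  also have "\<dots> = (\<Sum>i=0..<n. (w i)\<^sup>2) - 2 * q + (\<Sum>i=0..<n. (y i)\<^sup>2)"
    unfolding q_def by (simp add: power2_diff sum.distrib sum_subtractf sum_distrib_left mult.assoc)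
  finally have qw: "q \<le> (\<Sum>i=0..<n. (w i)\<^sup>2)" using qy by linarith
  have "geI n (Q + outer n w)"
    unfolding geI_def
  proof (intro conjI allI)
    show "Q + outer n w \<in> carrier_mat n n" using Q O by simp
    fix z :: "nat \<Rightarrow> real"
    have "(\<Sum>i=0..<n. (z i)\<^sup>2) \<le> (\<Sum>i=0..<n. \<Sum>j=0..<n. z i * Q $$ (i,j) * z j)"
      using g geI_def by auto
    also have "\<dots> \<le> (\<Sum>i=0..<n. \<Sum>j=0..<n. z i * Q $$ (i,j) * z j) + (\<Sum>i=0..<n. z i * w i)\<^sup>2"
      by simp
    also have "\<dots> = (\<Sum>i=0..<n. \<Sum>j=0..<n. z i * (Q + outer n w) $$ (i,j) * z j)"
    proof -
      have "(\<Sum>i=0..<n. z i * w i)\<^sup>2 = (\<Sum>i=0..<n. \<Sum>j=0..<n. z i * (w i * w j) * z j)"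
        by (simp add: power2_eq_square sum_product mult_ac)
      moreover have "(\<Sum>i=0..<n. \<Sum>j=0..<n. z i * (Q + outer n w) $$ (i,j) * z j)
          = (\<Sum>i=0..<n. \<Sum>j=0..<n. z i * Q $$ (i,j) * z j + z i * (w i * w j) * z j)"
        using Q by (intro sum.cong refl) (simp add: outer_def algebra_simps)
      ultimately show ?thesis by (simp add: sum.distrib)
    qed
    finally show "(\<Sum>i=0..<n. (z i)\<^sup>2) \<le> (\<Sum>i=0..<n. \<Sum>j=0..<n. z i * (Q + outer n w) $$ (i,j) * z j)" .
  qed
  then show ?thesis using det q0 qw by blast
qed

fun Qs :: "nat \<Rightarrow> (nat \<Rightarrow> nat \<Rightarrow> real) \<Rightarrow> nat \<Rightarrow> real mat" where
  "Qs n u 0 = 1\<^sub>m n"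
| "Qs n u (Suc M) = Qs n u M + outer n (u M)"

lemma geI_one: "geI n (1\<^sub>m n)"
  unfolding geI_def
proof (intro conjI allI)
  fix y :: "nat \<Rightarrow> real"
  have "(\<Sum>i=0..<n. \<Sum>j=0..<n. y i * 1\<^sub>m n $$ (i,j) * y j) = (\<Sum>i=0..<n. \<Sum>j=0..<n. if i = j then (y i)\<^sup>2 else 0)"
    by (intro sum.cong refl) (auto simp: power2_eq_square)
  also have "\<dots> = (\<Sum>i=0..<n. (y i)\<^sup>2)" by simp
  finally show "(\<Sum>i=0..<n. (y i)\<^sup>2) \<le> (\<Sum>i=0..<n. \<Sum>j=0..<n. y i * 1\<^sub>m n $$ (i,j) * y j)" by simp
qed simp

lemma Qs_carrier: "Qs n u M \<in> carrier_mat n n"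
  by (induction M) (auto simp: outer_def)

lemma Qs_index: "i < n \<Longrightarrow> j < n \<Longrightarrow> Qs n u M $$ (i,j) = (if i = j then 1 else 0) + (\<Sum>k<M. u k i * u k j)"
proof (induction M)
  case 0 then show ?case by simp
next
  case (Suc M)
  have "Qs n u (Suc M) $$ (i,j) = Qs n u M $$ (i,j) + outer n (u M) $$ (i,j)"
    using Qs_carrier[of n u M] Suc.prems by (simp add: outer_def)
  then show ?case using Suc by (simp add: outer_def)
qed

lemma Qs_geI: "geI n (Qs n u M)"
  by (induction M) (auto simp: geI_one rank1)

lemma Qs_det_pos: "det (Qs n u M) > 0"
proof (induction M)
  case 0 then show ?case by simp
next
  case (Suc M)
  obtain q where "0 \<le> q" "det (Qs n u (Suc M)) = det (Qs n u M) * (1 + q)"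
    using rank1[OF Qs_geI[of n u M], of "u M"] by auto
  then show ?case using Suc by simp
qed

lemma Qs_mono: "N \<le> M \<Longrightarrow> det (Qs n u N) \<le> det (Qs n u M) \<and>
   det (Qs n u M) \<le> det (Qs n u N) * exp (\<Sum>k=N..<M. \<Sum>i=0..<n. (u k i)\<^sup>2)"
proof (induction M rule: dec_induct)
  case base then show ?case by simp
next
  case (step M)
  obtain q where q: "0 \<le> q" "q \<le> (\<Sum>i=0..<n. (u M i)\<^sup>2)" "det (Qs n u (Suc M)) = det (Qs n u M) * (1 + q)"
    using rank1[OF Qs_geI[of n u M], of "u M"] by auto
  have dpos: "det (Qs n u M) > 0" by (rule Qs_det_pos)
  have "1 + q \<le> exp q" by (rule exp_ge_add_one_self)
  also have "\<dots> \<le> exp (\<Sum>i=0..<n. (u M i)\<^sup>2)" using q(2) by simp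
  finally have e: "1 + q \<le> exp (\<Sum>i=0..<n. (u M i)\<^sup>2)" .
  have "det (Qs n u (Suc M)) \<le> det (Qs n u M) * exp (\<Sum>i=0..<n. (u M i)\<^sup>2)"
    using q(3) e dpos by (simp add: mult_left_mono)
  also have "\<dots> \<le> det (Qs n u N) * exp (\<Sum>k=N..<M. \<Sum>i=0..<n. (u k i)\<^sup>2) * exp (\<Sum>i=0..<n. (u M i)\<^sup>2)"
    using step.IH by (intro mult_right_mono) auto
  also have "\<dots> = det (Qs n u N) * exp (\<Sum>k=N..<Suc M. \<Sum>i=0..<n. (u k i)\<^sup>2)"
    using step.hyps by (simp add: exp_add mult.assoc)
  finally have up: "det (Qs n u (Suc M)) \<le> det (Qs n u N) * exp (\<Sum>k=N..<Suc M. \<Sum>i=0..<n. (u k i)\<^sup>2)" .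
  have "det (Qs n u M) \<le> det (Qs n u (Suc M))" using q dpos by simp
  then show ?case using step.IH up by linarith
qed

lemma det_tendsto:
  fixes A :: "'b \<Rightarrow> real mat"
  assumes A: "\<And>x. A x \<in> carrier_mat n n" and B: "B \<in> carrier_mat n n"
    and lim: "\<And>i j. i < n \<Longrightarrow> j < n \<Longrightarrow> ((\<lambda>x. A x $$ (i,j)) \<longlongrightarrow> B $$ (i,j)) F"
  shows "((\<lambda>x. det (A x)) \<longlongrightarrow> det B) F"
proof -
  have "((\<lambda>x. \<Sum>p\<in>{p. p permutes {0..<n}}. signof p * (\<Prod>i=0..<n. A x $$ (i, p i)))
        \<longlongrightarrow> (\<Sum>p\<in>{p. p permutes {0..<n}}. signof p * (\<Prod>i=0..<n. B $$ (i, p i)))) F"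
  proof (intro tendsto_intros)
    fix p i assume p: "p \<in> {p. p permutes {0..<n}}" and i: "i \<in> {0..<n}"
    have "p i < n" using p i by (auto dest: permutes_in_image)
    then show "((\<lambda>x. A x $$ (i, p i)) \<longlongrightarrow> B $$ (i, p i)) F" using i lim by auto
  qed
  moreover have "\<And>x. det (A x) = (\<Sum>p\<in>{p. p permutes {0..<n}}. signof p * (\<Prod>i=0..<n. A x $$ (i, p i)))"
    using det_def'[OF A] by simp
  ultimately show ?thesis using det_def'[OF B] by simp
qed

lemma fixed_n_bounds:
  assumes P: "P \<in> carrier_mat n n"
    and S: "\<And>i j. i < n \<Longrightarrow> j < n \<Longrightarrow> (\<lambda>k. u k i * u k j) sums (P $$ (i,j) - (if i = j then 1 else 0))"
  shows "det (Qs n u N) \<le> det P \<and>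
         det P \<le> det (Qs n u N) * exp (\<Sum>i=0..<n. (P $$ (i,i) - 1 - (\<Sum>k<N. (u k i)\<^sup>2)))"
proof -
  have lim: "(\<lambda>M. det (Qs n u M)) \<longlonglongrightarrow> det P"
  proof (rule det_tendsto[OF Qs_carrier P])
    fix i j assume ij: "i < n" "j < n"
    have "(\<lambda>M. \<Sum>k<M. u k i * u k j) \<longlonglongrightarrow> P $$ (i,j) - (if i = j then 1 else 0)"
      using S[OF ij] by (simp add: sums_def)
    then have "(\<lambda>M. (if i = j then 1 else 0) + (\<Sum>k<M. u k i * u k j)) \<longlonglongrightarrow>
        (if i = j then 1 else 0) + (P $$ (i,j) - (if i = j then 1 else 0))"
      by (intro tendsto_add tendsto_const)
    then show "(\<lambda>M. Qs n u M $$ (i,j)) \<longlonglongrightarrow> P $$ (i,j)"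
      using ij by (simp add: Qs_index)
  qed
  have lo: "det (Qs n u N) \<le> det P"
    by (rule tendsto_lowerbound[OF lim]) (unfold eventually_sequentially, use Qs_mono[of N _ n u] in blast, simp)
  have sq: "(\<lambda>k. (u k i)\<^sup>2) sums (P $$ (i,i) - 1)" if "i < n" for i
    using S[OF that that] by (simp add: power2_eq_square)
  have "det P \<le> det (Qs n u N) * exp (\<Sum>i=0..<n. (P $$ (i,i) - 1 - (\<Sum>k<N. (u k i)\<^sup>2)))"
  proof (rule tendsto_upperbound[OF lim], unfold eventually_sequentially, intro exI allI impI)
    fix M assume M: "N \<le> M"
    have "(\<Sum>k=N..<M. \<Sum>i=0..<n. (u k i)\<^sup>2) = (\<Sum>i=0..<n. (\<Sum>k<M. (u k i)\<^sup>2) - (\<Sum>k<N. (u k i)\<^sup>2))"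
    proof -
      have "(\<Sum>k=N..<M. \<Sum>i=0..<n. (u k i)\<^sup>2) = (\<Sum>i=0..<n. \<Sum>k=N..<M. (u k i)\<^sup>2)" by (rule sum.swap)
      also have "\<dots> = (\<Sum>i=0..<n. (\<Sum>k<M. (u k i)\<^sup>2) - (\<Sum>k<N. (u k i)\<^sup>2))"
      proof (intro sum.cong refl)
        fix i
        have "(\<Sum>k<M. (u k i)\<^sup>2) = (\<Sum>k<N. (u k i)\<^sup>2) + (\<Sum>k=N..<M. (u k i)\<^sup>2)"
          using sum.atLeastLessThan_concat[of 0 N M "\<lambda>k. (u k i)\<^sup>2"] M by (simp add: lessThan_atLeast0)
        then show "(\<Sum>k=N..<M. (u k i)\<^sup>2) = (\<Sum>k<M. (u k i)\<^sup>2) - (\<Sum>k<N. (u k i)\<^sup>2)" by simp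
      qed
      finally show ?thesis .
    qed
    also have "\<dots> \<le> (\<Sum>i=0..<n. (P $$ (i,i) - 1 - (\<Sum>k<N. (u k i)\<^sup>2)))"
    proof (intro sum_mono)
      fix i assume "i \<in> {0..<n}"
      then have "(\<Sum>k<M. (u k i)\<^sup>2) \<le> P $$ (i,i) - 1"
      proof -
        have si: "(\<lambda>k. (u k i)\<^sup>2) sums (P $$ (i,i) - 1)" using sq \<open>i \<in> {0..<n}\<close> by auto
        have "(\<Sum>k<M. (u k i)\<^sup>2) \<le> (\<Sum>k. (u k i)\<^sup>2)"
          using si by (intro sum_le_suminf) (auto simp: sums_iff)
        then show ?thesis using si by (simp add: sums_iff)
      qed
      then show "(\<Sum>k<M. (u k i)\<^sup>2) - (\<Sum>k<N. (u k i)\<^sup>2) \<le> P $$ (i,i) - 1 - (\<Sum>k<N. (u k i)\<^sup>2)" by simp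
    qed
    finally have "exp (\<Sum>k=N..<M. \<Sum>i=0..<n. (u k i)\<^sup>2) \<le> exp (\<Sum>i=0..<n. (P $$ (i,i) - 1 - (\<Sum>k<N. (u k i)\<^sup>2)))"
      by simp
    then show "det (Qs n u M) \<le> det (Qs n u N) * exp (\<Sum>i=0..<n. (P $$ (i,i) - 1 - (\<Sum>k<N. (u k i)\<^sup>2)))"
      using Qs_mono[OF M, of n u] Qs_det_pos[of n u N]
      by (meson mult_left_mono less_imp_le order_trans)
  qed simp
  then show ?thesis using lo by simp
qed



lemma riemann_bound:
  fixes f :: "real \<Rightarrow> real" and T e :: real and n :: nat
  assumes T: "T > 0" and n: "n > 0" and f: "continuous_on {0..T} f"
    and uc: "\<And>x y. x \<in> {0..T} \<Longrightarrow> y \<in> {0..T} \<Longrightarrow> \<bar>x - y\<bar> \<le> T / n \<Longrightarrow> \<bar>f x - f y\<bar> \<le> e"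
  shows "\<bar>T / n * (\<Sum>i<n. f (sample_time T n i)) - integral {0..T} f\<bar> \<le> T * e"
proof -
  define h where "h = T / n"
  have h: "h > 0" using T n by (simp add: h_def)
  have nh: "real n * h = T" using n by (simp add: h_def)
  have st: "sample_time T n i = real i * h" for i by (simp add: sample_time_def h_def)
  have main: "m \<le> n \<Longrightarrow> \<bar>h * (\<Sum>i<m. f (real i * h)) - integral {0..real m * h} f\<bar> \<le> real m * h * e" for m
  proof (induction m)
    case 0 then show ?case by simp
  next
    case (Suc m)
    define a where "a = real m * h"
    define b where "b = real (Suc m) * h"
    have ab: "b = a + h" by (simp add: a_def b_def algebra_simps)
    have a0: "0 \<le> a" using h by (simp add: a_def)
    have bT: "b \<le> T"
    proof -
      have "real (Suc m) \<le> real n" using Suc.prems by simp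
      then have "real (Suc m) * h \<le> real n * h" using h by (intro mult_right_mono) auto
      then show ?thesis using nh by (simp add: b_def)
    qed
    have intb: "f integrable_on {0..b}"
      by (rule integrable_continuous_interval, rule continuous_on_subset[OF f]) (use bT in auto)
    have comb: "integral {0..a} f + integral {a..b} f = integral {0..b} f"
      by (rule Henstock_Kurzweil_Integration.integral_combine) (use a0 ab h intb in auto)
    have intab: "f integrable_on {a..b}"
      by (rule integrable_continuous_interval, rule continuous_on_subset[OF f]) (use a0 bT in auto)
    have "integral {a..b} (\<lambda>x. f x - f a) = integral {a..b} f - h * f a"
      using intab ab h by (subst integral_diff) auto
    moreover have "norm (integral {a..b} (\<lambda>x. f x - f a)) \<le> integral {a..b} (\<lambda>x. e)"
    proof (rule integral_norm_bound_integral)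
      show "(\<lambda>x. f x - f a) integrable_on {a..b}" using intab by (intro integrable_diff) auto
      show "(\<lambda>x. e) integrable_on {a..b}" by (rule Henstock_Kurzweil_Integration.integrable_const_ivl)
      fix x assume x: "x \<in> {a..b}"
      then show "norm (f x - f a) \<le> e"
        using uc[of x a] a0 bT ab h by (auto simp: h_def)
    qed
    moreover have "integral {a..b} (\<lambda>x. e) = h * e" using ab h by (simp add: mult.commute)
    ultimately have piece: "\<bar>integral {a..b} f - h * f a\<bar> \<le> h * e" by (simp only: real_norm_def)
    have IH: "\<bar>h * (\<Sum>i<m. f (real i * h)) - integral {0..a} f\<bar> \<le> real m * h * e"
      using Suc by (simp add: a_def)
    have "h * (\<Sum>i<Suc m. f (real i * h)) - integral {0..b} f
        = (h * (\<Sum>i<m. f (real i * h)) - integral {0..a} f) - (integral {a..b} f - h * f a)"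
      using comb by (simp add: a_def algebra_simps)
    then have "\<bar>h * (\<Sum>i<Suc m. f (real i * h)) - integral {0..b} f\<bar> \<le> real m * h * e + h * e"
      using IH piece by linarith
    then show ?case by (simp add: b_def algebra_simps)
  qed
  from main[of n] have "\<bar>h * (\<Sum>i<n. f (real i * h)) - integral {0..T} f\<bar> \<le> T * e"
    by (simp only: nh order_refl)
  then show ?thesis by (simp add: st h_def[symmetric])
qed

lemma riemann_tendsto:
  fixes f :: "real \<Rightarrow> real" and T :: real
  assumes T: "T > 0" and f: "continuous_on {0..T} f"
  shows "(\<lambda>n. T / n * (\<Sum>i<n. f (sample_time T n i))) \<longlonglongrightarrow> integral {0..T} f"
proof (rule LIMSEQ_I)
  fix r :: real assume r: "r > 0"
  have "uniformly_continuous_on {0..T} f"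
    by (rule compact_uniformly_continuous[OF f compact_Icc])
  then obtain d where d: "d > 0" and dd: "\<And>x y. x \<in> {0..T} \<Longrightarrow> y \<in> {0..T} \<Longrightarrow> dist y x < d \<Longrightarrow> dist (f y) (f x) < r / (2 * T)"
    unfolding uniformly_continuous_on_def using r T by (metis divide_pos_pos mult_pos_pos zero_less_numeral)
  obtain N :: nat where N: "T / d < N" using reals_Archimedean2 by blast
  show "\<exists>no. \<forall>n\<ge>no. norm (T / n * (\<Sum>i<n. f (sample_time T n i)) - integral {0..T} f) < r"
  proof (intro exI allI impI)
    fix n assume nN: "n \<ge> Suc N"
    have n: "n > 0" using nN by simp
    have "T / d < n" using N nN by linarith
    then have Tn: "T / n < d" using d n by (simp add: field_simps)
    have "\<bar>T / n * (\<Sum>i<n. f (sample_time T n i)) - integral {0..T} f\<bar> \<le> T * (r / (2 * T))"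
    proof (rule riemann_bound[OF T n f])
      fix x y assume "x \<in> {0..T}" "y \<in> {0..T}" "\<bar>x - y\<bar> \<le> T / n"
      then show "\<bar>f x - f y\<bar> \<le> r / (2 * T)" using dd[of y x] Tn by (simp add: dist_real_def)
    qed
    also have "\<dots> < r" using T r by simp
    finally show "norm (T / n * (\<Sum>i<n. f (sample_time T n i)) - integral {0..T} f) < r" by simp
  qed
qed

lemma sample_time_in: "T > 0 \<Longrightarrow> i < n \<Longrightarrow> sample_time T n i \<in> {0..T}"
  by (auto simp: sample_time_def field_simps)

lemma cont_slice:
  assumes R_cont: "continuous_on ({0..T} \<times> {0..T}) (\<lambda>(s, t). R s t)" and s: "s \<in> {0..T}"
  shows "continuous_on {0..T} (\<lambda>t. R s t)"
proof -
  have "continuous_on {0..T} ((\<lambda>(s, t). R s t) \<circ> (\<lambda>t. (s, t)))"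
    by (rule continuous_on_compose, intro continuous_intros, rule continuous_on_subset[OF R_cont]) (use s in auto)
  then show ?thesis by (simp add: o_def)
qed

lemma cont_diag:
  assumes R_cont: "continuous_on ({0..T} \<times> {0..T}) (\<lambda>(s, t). R s t)"
  shows "continuous_on {0..T} (\<lambda>s. R s s)"
proof -
  have "continuous_on {0..T} ((\<lambda>(s, t). R s t) \<circ> (\<lambda>t. (t, t)))"
    by (rule continuous_on_compose, intro continuous_intros, rule continuous_on_subset[OF R_cont]) auto
  then show ?thesis by (simp add: o_def)
qed

lemma lam_nonneg:
  fixes R :: "real \<Rightarrow> real \<Rightarrow> real" and \<phi> :: "real \<Rightarrow> real"
  assumes T: "T > 0"
    and R_cont: "continuous_on ({0..T} \<times> {0..T}) (\<lambda>(s, t). R s t)"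
    and R_posdef: "\<forall>(m::nat) (x::nat \<Rightarrow> real) (c::nat \<Rightarrow> real).
                     (\<forall>i<m. x i \<in> {0..T}) \<longrightarrow>
                     0 \<le> (\<Sum>i<m. \<Sum>j<m. c i * c j * R (x i) (x j))"
    and phic: "continuous_on {0..T} \<phi>"
    and eig: "\<forall>s\<in>{0..T}. l * \<phi> s = integral {0..T} (\<lambda>t. R s t * \<phi> t)"
    and nrm: "integral {0..T} (\<lambda>t. \<phi> t * \<phi> t) = 1"
  shows "l \<ge> 0"
proof -
  define t where "t n i = sample_time T n i" for n i
  have tin: "i < n \<Longrightarrow> t n i \<in> {0..T}" for n i using sample_time_in[OF T] by (simp add: t_def)
  define G where "G n s = T / n * (\<Sum>j<n. R s (t n j) * \<phi> (t n j))" for n s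
  define Qn where "Qn n = (\<Sum>i<n. \<Sum>j<n. (T / n * \<phi> (t n i)) * (T / n * \<phi> (t n j)) * R (t n i) (t n j))" for n
  define Q2 where "Q2 n = T / n * (\<Sum>i<n. l * (\<phi> (t n i) * \<phi> (t n i)))" for n
  have Qn0: "Qn n \<ge> 0" for n
    using R_posdef[rule_format, of n "t n" "\<lambda>i. T / n * \<phi> (t n i)"] tin unfolding Qn_def by simp
  have QnG: "Qn n = T / n * (\<Sum>i<n. \<phi> (t n i) * G n (t n i))" for n
    unfolding Qn_def G_def by (simp add: sum_distrib_left mult_ac)
  have Q2lim: "Q2 \<longlonglongrightarrow> l"
  proof -
    have c: "continuous_on {0..T} (\<lambda>s. l * (\<phi> s * \<phi> s))" by (intro continuous_intros phic)
    show ?thesis using riemann_tendsto[OF T c] unfolding Q2_def t_def by (simp add: nrm)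
  qed
  obtain B where B: "B > 0" "\<And>s. s \<in> {0..T} \<Longrightarrow> \<bar>\<phi> s\<bar> \<le> B"
  proof -
    have "bounded (\<phi> ` {0..T})" by (rule compact_imp_bounded, rule compact_continuous_image[OF phic compact_Icc])
    then obtain B where "B > 0" "\<forall>x\<in>\<phi> ` {0..T}. norm x \<le> B" by (auto simp: bounded_pos)
    then show ?thesis using that by auto
  qed
  define F where "F = (\<lambda>(s, t). R s t * \<phi> t)"
  have Fc: "continuous_on ({0..T} \<times> {0..T}) F"
  proof -
    have 1: "continuous_on ({0..T} \<times> {0..T}) (\<lambda>p. \<phi> (snd p))"
      by (rule continuous_on_compose2[OF phic continuous_on_snd]) auto
    have "continuous_on ({0..T} \<times> {0..T}) (\<lambda>p. (\<lambda>(s, t). R s t) p * \<phi> (snd p))"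
      by (rule continuous_on_mult[OF R_cont 1])
    then show ?thesis unfolding F_def by (simp add: split_def)
  qed
  have Fuc: "uniformly_continuous_on ({0..T} \<times> {0..T}) F"
    by (rule compact_uniformly_continuous[OF Fc]) (intro compact_Times compact_Icc)
  have diff0: "(\<lambda>n. Qn n - Q2 n) \<longlonglongrightarrow> 0"
  proof (rule LIMSEQ_I)
    fix r :: real assume r: "r > 0"
    define e where "e = r / (2 * T * T * B)"
    have e: "e > 0" using r T B by (simp add: e_def)
    obtain d where d: "d > 0" and dd: "\<And>x y. x \<in> {0..T} \<times> {0..T} \<Longrightarrow> y \<in> {0..T} \<times> {0..T} \<Longrightarrow> dist y x < d \<Longrightarrow> dist (F y) (F x) < e"
      using Fuc e unfolding uniformly_continuous_on_def by blast
    obtain N :: nat where N: "T / d < N" using reals_Archimedean2 by blast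
    show "\<exists>no. \<forall>n\<ge>no. norm (Qn n - Q2 n - 0) < r"
    proof (intro exI allI impI)
      fix n assume nN: "n \<ge> Suc N"
      have n: "n > 0" using nN by simp
      have "T / d < n" using N nN by linarith
      then have Tn: "T / n < d" using d n by (simp add: field_simps)
      have Gb: "\<bar>G n s - l * \<phi> s\<bar> \<le> T * e" if s: "s \<in> {0..T}" for s
      proof -
        have cs: "continuous_on {0..T} (\<lambda>t. R s t * \<phi> t)"
          by (intro continuous_intros cont_slice[OF R_cont s] phic)
        have "\<bar>T / n * (\<Sum>i<n. R s (sample_time T n i) * \<phi> (sample_time T n i)) - integral {0..T} (\<lambda>t. R s t * \<phi> t)\<bar> \<le> T * e"
        proof (rule riemann_bound[OF T n cs])
          fix x y assume xy: "x \<in> {0..T}" "y \<in> {0..T}" "\<bar>x - y\<bar> \<le> T / n"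
          have "dist (s, x) (s, y) < d" using xy Tn by (simp add: dist_Pair_Pair dist_real_def)
          then have "dist (F (s, x)) (F (s, y)) < e" using dd[of "(s,y)" "(s,x)"] s xy by auto
          then show "\<bar>R s x * \<phi> x - R s y * \<phi> y\<bar> \<le> e" by (simp add: F_def dist_real_def)
        qed
        then show ?thesis using eig s by (simp add: G_def t_def)
      qed
      have "Qn n - Q2 n = T / n * (\<Sum>i<n. \<phi> (t n i) * (G n (t n i) - l * \<phi> (t n i)))"
        unfolding QnG Q2_def by (simp add: sum_subtractf right_diff_distrib mult_ac)
      also have "\<bar>\<dots>\<bar> \<le> T / n * (\<Sum>i<n. B * (T * e))"
      proof -
        have "\<bar>\<Sum>i<n. \<phi> (t n i) * (G n (t n i) - l * \<phi> (t n i))\<bar> \<le> (\<Sum>i<n. B * (T * e))"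
        proof (rule order_trans[OF sum_abs], rule sum_mono)
          fix i assume "i \<in> {..<n}"
          then have ti: "t n i \<in> {0..T}" using tin by auto
          show "\<bar>\<phi> (t n i) * (G n (t n i) - l * \<phi> (t n i))\<bar> \<le> B * (T * e)"
            unfolding abs_mult using B(2)[OF ti] Gb[OF ti] by (intro mult_mono) auto
        qed
        moreover have ab: "\<bar>T / real n\<bar> = T / real n" using T n by simp
        ultimately show ?thesis unfolding abs_mult ab using T n by (intro mult_left_mono) auto
      qed
      also have "\<dots> = T * B * T * e" using n by simp
      also have "\<dots> < r" using r T B by (simp add: e_def field_simps)
      finally show "norm (Qn n - Q2 n - 0) < r" by simp
    qed
  qed
  have "(\<lambda>n. (Qn n - Q2 n) + Q2 n) \<longlonglongrightarrow> 0 + l" by (intro tendsto_add diff0 Q2lim)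
  then have "Qn \<longlonglongrightarrow> l" by simp
  then show ?thesis by (rule tendsto_lowerbound) (use Qn0 in auto)
qed


lemma Qs_sylv: "det (Qs n u N) = det (1\<^sub>m N + mat N N (\<lambda>(k,l). \<Sum>i<n. u k i * u l i))"
proof -
  define U where "U = mat n N (\<lambda>(i,k). u k i)"
  define W where "W = mat N n (\<lambda>(k,i). u k i)"
  have U: "U \<in> carrier_mat n N" and W: "W \<in> carrier_mat N n" by (auto simp: U_def W_def)
  have "Qs n u N = 1\<^sub>m n + U * W"
  proof (rule eq_matI)
    fix i j assume "i < dim_row (1\<^sub>m n + U * W)" "j < dim_col (1\<^sub>m n + U * W)"
    then have ij: "i < n" "j < n" using U W by auto
    have "(1\<^sub>m n + U * W) $$ (i,j) = (if i = j then 1 else 0) + (\<Sum>k=0..<N. u k i * u k j)"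
      using ij U W by (simp add: U_def W_def scalar_prod_def row_def col_def)
    then show "Qs n u N $$ (i,j) = (1\<^sub>m n + U * W) $$ (i,j)"
      using ij by (simp add: Qs_index atLeast0LessThan)
  qed (use U W Qs_carrier[of n u N] in auto)
  then have "det (Qs n u N) = det (1\<^sub>m N + W * U)" using sylvester[OF U W] by simp
  also have "W * U = mat N N (\<lambda>(k,l). \<Sum>i<n. u k i * u l i)"
    by (rule eq_matI) (auto simp: U_def W_def scalar_prod_def row_def col_def atLeast0LessThan)
  finally show ?thesis .
qed

lemma det_diag: "det (mat N N (\<lambda>(k,l). if k = l then f k else 0)) = (\<Prod>k<N. f k)"
proof -
  have "det (mat N N (\<lambda>(k,l). if k = l then f k else 0)) = prod_list (diag_mat (mat N N (\<lambda>(k,l). if k = l then f k else 0)))"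
    by (rule det_upper_triangular) (auto simp: upper_triangular_def)
  also have "\<dots> = prod_list (map f [0..<N])"
    unfolding diag_mat_def by (intro arg_cong[where f=prod_list] map_cong) auto
  also have "\<dots> = (\<Prod>k<N. f k)"
    by (simp add: prod.distinct_set_conv_list[symmetric] atLeast0LessThan)
  finally show ?thesis .
qed

lemma trace_sum:
  fixes R :: "real \<Rightarrow> real \<Rightarrow> real"
  assumes T: "T > 0"
    and R_cont: "continuous_on ({0..T} \<times> {0..T}) (\<lambda>(s, t). R s t)"
    and phi_cont: "\<forall>k. continuous_on {0..T} (phi k)"
    and orthonormal: "\<forall>i j. integral {0..T} (\<lambda>t. phi i t * phi j t) = (if i = j then 1 else 0)"
    and lam0: "\<And>k. lam k \<ge> 0"
    and mercer: "\<forall>s\<in>{0..T}. \<forall>t\<in>{0..T}. (\<lambda>k. lam k * phi k s * phi k t) sums R s t"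
  shows "lam sums integral {0..T} (\<lambda>s. R s s)"
proof -
  define f where "f N s = (\<Sum>k<N. lam k * (phi k s * phi k s))" for N s
  have fc: "continuous_on {0..T} (f N)" for N
    unfolding f_def using phi_cont by (intro continuous_intros) auto
  have fi: "integral {0..T} (f N) = (\<Sum>k<N. lam k)" for N
  proof -
    have "integral {0..T} (f N) = (\<Sum>k<N. integral {0..T} (\<lambda>s. lam k * (phi k s * phi k s)))"
      unfolding f_def
      by (rule integral_sum) (use phi_cont in \<open>auto intro!: integrable_continuous_interval continuous_intros\<close>)
    also have "\<dots> = (\<Sum>k<N. lam k)" using orthonormal by simp
    finally show ?thesis .
  qed
  have Rc: "continuous_on {0..T} (\<lambda>s. R s s)" by (rule cont_diag[OF R_cont])
  have fs: "(\<lambda>k. lam k * (phi k s * phi k s)) sums R s s" if "s \<in> {0..T}" for s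
    using mercer that by (simp add: mult.assoc)
  have fle: "f N s \<le> R s s" if "s \<in> {0..T}" for N s
  proof -
    have "f N s \<le> (\<Sum>k. lam k * (phi k s * phi k s))"
      unfolding f_def by (rule sum_le_suminf) (use fs[OF that] lam0 in \<open>auto simp: sums_iff\<close>)
    also have "\<dots> = R s s" using fs[OF that] by (simp add: sums_iff)
    finally show ?thesis .
  qed
  have mc: "(\<lambda>s. R s s) integrable_on {0..T} \<and> (\<lambda>N. integral {0..T} (f N)) \<longlonglongrightarrow> integral {0..T} (\<lambda>s. R s s)"
  proof (rule monotone_convergence_increasing)
    show "f N integrable_on {0..T}" for N by (rule integrable_continuous_interval[OF fc])
    show "f N x \<le> f (Suc N) x" if "x \<in> {0..T}" for N x
      unfolding f_def using lam0[of N] by simp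
    show "(\<lambda>N. f N x) \<longlonglongrightarrow> R x x" if "x \<in> {0..T}" for x
      using fs[OF that] unfolding f_def sums_def by simp
    show "bounded (range (\<lambda>N. integral {0..T} (f N)))"
    proof (rule boundedI)
      fix y assume "y \<in> range (\<lambda>N. integral {0..T} (f N))"
      then obtain N where y: "y = integral {0..T} (f N)" by auto
      have "integral {0..T} (f N) \<le> integral {0..T} (\<lambda>s. R s s)"
        using fle by (intro integral_le integrable_continuous_interval fc Rc) auto
      moreover have "0 \<le> integral {0..T} (f N)" unfolding fi using lam0 by (simp add: sum_nonneg)
      ultimately show "norm y \<le> integral {0..T} (\<lambda>s. R s s)" using y by simp
    qed
  qed
  then show ?thesis unfolding sums_def using fi by simp
qed



theorem theorem1:
  fixes T n0 :: real
    and R :: "real \<Rightarrow> real \<Rightarrow> real"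
    and lam :: "nat \<Rightarrow> real"
    and phi :: "nat \<Rightarrow> real \<Rightarrow> real"
  assumes T_pos: "T > 0"
    and n0_pos: "n0 > 0"
    and R_cont: "continuous_on ({0..T} \<times> {0..T}) (\<lambda>(s, t). R s t)"
    and R_sym: "\<forall>s\<in>{0..T}. \<forall>t\<in>{0..T}. R s t = R t s"
    and R_posdef: "\<forall>(m::nat) (x::nat \<Rightarrow> real) (c::nat \<Rightarrow> real).
                     (\<forall>i<m. x i \<in> {0..T}) \<longrightarrow>
                     0 \<le> (\<Sum>i<m. \<Sum>j<m. c i * c j * R (x i) (x j))"
    and phi_cont: "\<forall>k. continuous_on {0..T} (phi k)"
    and eigen: "\<forall>k. \<forall>s\<in>{0..T}. lam k * phi k s = integral {0..T} (\<lambda>t. R s t * phi k t)"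
    and orthonormal: "\<forall>i j. integral {0..T} (\<lambda>t. phi i t * phi j t) = (if i = j then 1 else 0)"
    and mercer: "\<forall>s\<in>{0..T}. \<forall>t\<in>{0..T}. (\<lambda>k. lam k * phi k s * phi k t) sums R s t"
  shows "summable (\<lambda>k. ln (1 + lam k / (n0 / 2)))
         \<and> (\<lambda>n. sampled_MI R T n0 n) \<longlonglongrightarrow> 1/2 * (\<Sum>k. ln (1 + lam k / (n0 / 2)))"
proof -
  define c where "c = 2 / n0"
  have c: "c > 0" using n0_pos by (simp add: c_def)
  have lam0: "lam k \<ge> 0" for k
    by (rule lam_nonneg[OF T_pos R_cont R_posdef, of "phi k" "lam k"])
       (use phi_cont eigen orthonormal in auto)
  define I where "I = integral {0..T} (\<lambda>s. R s s)"
  have lsum: "lam sums I"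
    unfolding I_def by (rule trace_sum[OF T_pos R_cont phi_cont orthonormal lam0 mercer])
  define g where "g k = ln (1 + lam k / (n0 / 2))" for k
  have gc: "lam k / (n0 / 2) = c * lam k" for k by (simp add: c_def)
  have g0: "g k \<ge> 0" for k unfolding g_def gc using c lam0[of k] by simp
  have gle: "g k \<le> c * lam k" for k
    unfolding g_def gc using c lam0[of k] by (intro ln_add_one_self_le_self) simp
  have gsum: "summable g"
  proof (rule summable_comparison_test'[where g = "\<lambda>k. c * lam k"])
    show "summable (\<lambda>k. c * lam k)" using lsum by (intro summable_mult) (auto simp: sums_iff)
    show "norm (g k) \<le> c * lam k" for k using g0[of k] gle[of k] by simp
  qed
  define S where "S = suminf g"
  define t where "t n i = sample_time T n i" for n i
  define a where "a n = 2 * T / (real n * n0)" for n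
  define P where "P n = 1\<^sub>m n + a n \<cdot>\<^sub>m sample_cov R T n" for n
  define u where "u n k i = sqrt (a n * lam k) * phi k (t n i)" for n k i
  define E where "E N s = R s s - (\<Sum>k<N. lam k * (phi k s * phi k s))" for N s
  have a_eq: "a n = c * (T / n)" for n by (simp add: a_def c_def)
  have a0: "a n \<ge> 0" for n using T_pos n0_pos by (simp add: a_def)
  have tin: "i < n \<Longrightarrow> t n i \<in> {0..T}" for n i using sample_time_in[OF T_pos] by (simp add: t_def)
  have Pc: "P n \<in> carrier_mat n n" for n by (simp add: P_def sample_cov_def)
  have Pij: "P n $$ (i,j) = (if i = j then 1 else 0) + a n * R (t n i) (t n j)" if "i < n" "j < n" for n i j
    using that by (simp add: P_def sample_cov_def t_def)
  have uu: "u n k i * u n k j = a n * (lam k * phi k (t n i) * phi k (t n j))" for n k i j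
  proof -
    have "sqrt (a n * lam k) * sqrt (a n * lam k) = a n * lam k"
      using a0[of n] lam0[of k] by (simp add: real_sqrt_mult_self)
    then show ?thesis unfolding u_def by (simp add: mult_ac)
  qed
  have bnds: "det (Qs n (u n) N) \<le> det (P n) \<and>
      det (P n) \<le> det (Qs n (u n) N) * exp (c * (T / n * (\<Sum>i<n. E N (t n i))))" for n N
  proof -
    have Ss: "(\<lambda>k. u n k i * u n k j) sums (P n $$ (i,j) - (if i = j then 1 else 0))" if ij: "i < n" "j < n" for i j
    proof -
      have "(\<lambda>k. lam k * phi k (t n i) * phi k (t n j)) sums R (t n i) (t n j)"
        using mercer tin ij by auto
      then have "(\<lambda>k. a n * (lam k * phi k (t n i) * phi k (t n j))) sums (a n * R (t n i) (t n j))"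
        by (rule sums_mult)
      then show ?thesis using ij by (simp add: uu Pij)
    qed
    have fb: "det (Qs n (u n) N) \<le> det (P n) \<and>
         det (P n) \<le> det (Qs n (u n) N) * exp (\<Sum>i=0..<n. (P n $$ (i,i) - 1 - (\<Sum>k<N. (u n k i)\<^sup>2)))"
      by (rule fixed_n_bounds[OF Pc Ss])
    have "(\<Sum>i=0..<n. (P n $$ (i,i) - 1 - (\<Sum>k<N. (u n k i)\<^sup>2))) = (\<Sum>i<n. a n * E N (t n i))"
    proof (unfold atLeast0LessThan, rule sum.cong[OF refl])
      fix i assume "i \<in> {..<n}"
      then have i: "i < n" by simp
      have "(\<Sum>k<N. (u n k i)\<^sup>2) = a n * (\<Sum>k<N. lam k * (phi k (t n i) * phi k (t n i)))"
        by (simp add: power2_eq_square uu sum_distrib_left mult_ac)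
      then show "P n $$ (i,i) - 1 - (\<Sum>k<N. (u n k i)\<^sup>2) = a n * E N (t n i)"
        using i by (simp add: Pij E_def right_diff_distrib)
    qed
    also have "\<dots> = c * (T / n * (\<Sum>i<n. E N (t n i)))"
      by (simp add: a_eq sum_distrib_left mult_ac)
    finally show ?thesis using fb by simp
  qed
  have L1: "(\<lambda>n. ln (det (Qs n (u n) N))) \<longlonglongrightarrow> (\<Sum>k<N. g k)" for N
  proof -
    define D where "D = mat N N (\<lambda>(k,l). if k = l then 1 + c * lam k else 0)"
    have Dc: "D \<in> carrier_mat N N" by (simp add: D_def)
    have ent: "(\<Sum>i<n. u n k i * u n l i) = c * sqrt (lam k * lam l) * (T / n * (\<Sum>i<n. phi k (t n i) * phi l (t n i)))" for n k l
    proof -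
      have "u n k i * u n l i = a n * sqrt (lam k * lam l) * (phi k (t n i) * phi l (t n i))" for i
      proof -
        have "sqrt (a n * lam k) * sqrt (a n * lam l) = sqrt (a n) * sqrt (a n) * sqrt (lam k * lam l)"
          by (simp add: real_sqrt_mult mult_ac)
        also have "\<dots> = a n * sqrt (lam k * lam l)" using a0[of n] by (simp add: real_sqrt_mult_self)
        finally show ?thesis unfolding u_def by (simp add: mult_ac)
      qed
      then show ?thesis by (simp add: sum_distrib_left a_eq mult_ac)
    qed
    have lim: "(\<lambda>n. (1\<^sub>m N + mat N N (\<lambda>(k,l). \<Sum>i<n. u n k i * u n l i)) $$ (k,l)) \<longlonglongrightarrow> D $$ (k,l)"
      if kl: "k < N" "l < N" for k l
    proof -
      have cc: "continuous_on {0..T} (\<lambda>s. phi k s * phi l s)" using phi_cont by (intro continuous_intros) auto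
      have "(\<lambda>n. T / n * (\<Sum>i<n. phi k (t n i) * phi l (t n i))) \<longlonglongrightarrow> (if k = l then 1 else 0)"
        using riemann_tendsto[OF T_pos cc] orthonormal by (simp add: t_def)
      then have "(\<lambda>n. (if k = l then 1 else 0) + c * sqrt (lam k * lam l) * (T / n * (\<Sum>i<n. phi k (t n i) * phi l (t n i))))
          \<longlonglongrightarrow> (if k = l then 1 else 0) + c * sqrt (lam k * lam l) * (if k = l then 1 else 0)"
        by (intro tendsto_intros)
      moreover have "(if k = l then 1 else 0) + c * sqrt (lam k * lam l) * (if k = l then 1 else 0) = D $$ (k,l)"
        using kl lam0[of k] lam0[of l] by (simp add: D_def real_sqrt_mult_self)
      ultimately show ?thesis using kl by (simp add: ent)
    qed
    have "(\<lambda>n. det (1\<^sub>m N + mat N N (\<lambda>(k,l). \<Sum>i<n. u n k i * u n l i))) \<longlonglongrightarrow> det D"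
      by (rule det_tendsto[OF _ Dc lim]) auto
    then have dl: "(\<lambda>n. det (Qs n (u n) N)) \<longlonglongrightarrow> (\<Prod>k<N. 1 + c * lam k)"
      by (simp add: Qs_sylv D_def det_diag)
    have pos: "(\<Prod>k<N. 1 + c * lam k) > 0" using c lam0 by (intro prod_pos) (simp add: add_pos_nonneg)
    have "(\<lambda>n. ln (det (Qs n (u n) N))) \<longlonglongrightarrow> ln (\<Prod>k<N. 1 + c * lam k)"
      by (rule tendsto_ln[OF dl]) (use pos in linarith)
    also have "ln (\<Prod>k<N. 1 + c * lam k) = (\<Sum>k<N. g k)"
    proof -
      have "\<And>k. 1 + c * lam k > 0" using c lam0 by (simp add: add_pos_nonneg)
      then have "ln (\<Prod>k<N. 1 + c * lam k) = (\<Sum>k<N. ln (1 + c * lam k))"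
        by (subst ln_prod) (auto simp: less_le)
      also have "\<dots> = (\<Sum>k<N. g k)" unfolding g_def gc by simp
      finally show ?thesis .
    qed
    finally show ?thesis .
  qed
  have L2: "(\<lambda>n. c * (T / n * (\<Sum>i<n. E N (t n i)))) \<longlonglongrightarrow> c * (I - (\<Sum>k<N. lam k))" for N
  proof -
    have Ec: "continuous_on {0..T} (E N)"
      unfolding E_def using phi_cont cont_diag[OF R_cont] by (intro continuous_intros) auto
    have "integral {0..T} (E N) = I - (\<Sum>k<N. lam k)"
    proof -
      have i1: "(\<lambda>s. R s s) integrable_on {0..T}" by (rule integrable_continuous_interval[OF cont_diag[OF R_cont]])
      have i2: "(\<lambda>s. \<Sum>k<N. lam k * (phi k s * phi k s)) integrable_on {0..T}"
        using phi_cont by (intro integrable_continuous_interval continuous_intros) auto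
      have "integral {0..T} (\<lambda>s. \<Sum>k<N. lam k * (phi k s * phi k s)) = (\<Sum>k<N. integral {0..T} (\<lambda>s. lam k * (phi k s * phi k s)))"
        by (rule integral_sum) (use phi_cont in \<open>auto intro!: integrable_continuous_interval continuous_intros\<close>)
      also have "\<dots> = (\<Sum>k<N. lam k)" using orthonormal by simp
      finally show ?thesis unfolding E_def I_def using i1 i2 by (simp add: integral_diff)
    qed
    then have "(\<lambda>n. T / n * (\<Sum>i<n. E N (t n i))) \<longlonglongrightarrow> I - (\<Sum>k<N. lam k)"
      using riemann_tendsto[OF T_pos Ec] by (simp add: t_def)
    then show ?thesis by (rule tendsto_mult_left)
  qed
  have tail1: "(\<lambda>N. \<Sum>k<N. g k) \<longlonglongrightarrow> S" unfolding S_def using gsum by (simp add: summable_LIMSEQ)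
  have tail2: "(\<lambda>N. c * (I - (\<Sum>k<N. lam k))) \<longlonglongrightarrow> 0"
  proof -
    have "(\<lambda>N. c * (I - (\<Sum>k<N. lam k))) \<longlonglongrightarrow> c * (I - I)"
      using lsum unfolding sums_def by (intro tendsto_intros)
    then show ?thesis by simp
  qed
  have main: "(\<lambda>n. ln (det (P n))) \<longlonglongrightarrow> S"
  proof (rule LIMSEQ_I)
    fix r :: real assume r: "r > 0"
    then have r4: "r / 4 > 0" by simp
    obtain N1 where N1: "\<And>N. N \<ge> N1 \<Longrightarrow> norm ((\<Sum>k<N. g k) - S) < r / 4"
      using LIMSEQ_D[OF tail1 r4] by blast
    obtain N2 where N2: "\<And>N. N \<ge> N2 \<Longrightarrow> norm (c * (I - (\<Sum>k<N. lam k)) - 0) < r / 4"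
      using LIMSEQ_D[OF tail2 r4] by blast
    define N where "N = max N1 N2"
    have hN1: "\<bar>(\<Sum>k<N. g k) - S\<bar> < r / 4" using N1[of N] by (simp add: N_def)
    have hN2: "\<bar>c * (I - (\<Sum>k<N. lam k))\<bar> < r / 4" using N2[of N] by (simp add: N_def)
    obtain M1 where M1: "\<And>n. n \<ge> M1 \<Longrightarrow> norm (ln (det (Qs n (u n) N)) - (\<Sum>k<N. g k)) < r / 4"
      using LIMSEQ_D[OF L1 r4] by blast
    obtain M2 where M2: "\<And>n. n \<ge> M2 \<Longrightarrow> norm (c * (T / n * (\<Sum>i<n. E N (t n i))) - c * (I - (\<Sum>k<N. lam k))) < r / 4"
      using LIMSEQ_D[OF L2 r4] by blast
    show "\<exists>no. \<forall>n\<ge>no. norm (ln (det (P n)) - S) < r"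
    proof (intro exI allI impI)
      fix n assume n: "n \<ge> max M1 M2"
      have h1: "\<bar>ln (det (Qs n (u n) N)) - (\<Sum>k<N. g k)\<bar> < r / 4" using M1[of n] n by simp
      have h2: "\<bar>c * (T / n * (\<Sum>i<n. E N (t n i))) - c * (I - (\<Sum>k<N. lam k))\<bar> < r / 4" using M2[of n] n by simp
      have qpos: "det (Qs n (u n) N) > 0" by (rule Qs_det_pos)
      note b = bnds[of n N]
      have ppos: "det (P n) > 0" using b qpos by linarith
      have lo: "ln (det (Qs n (u n) N)) \<le> ln (det (P n))" using b qpos by simp
      have "ln (det (P n)) \<le> ln (det (Qs n (u n) N) * exp (c * (T / n * (\<Sum>i<n. E N (t n i)))))"
        using b ppos by simp
      also have "\<dots> = ln (det (Qs n (u n) N)) + c * (T / n * (\<Sum>i<n. E N (t n i)))"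
        using qpos by (simp add: ln_mult)
      finally have up: "ln (det (P n)) \<le> ln (det (Qs n (u n) N)) + c * (T / n * (\<Sum>i<n. E N (t n i)))" .
      have "\<bar>ln (det (P n)) - S\<bar> < r"
        using lo up h1 h2 hN1 hN2 unfolding abs_less_iff by linarith
      then show "norm (ln (det (P n)) - S) < r" by simp
    qed
  qed
  have "(\<lambda>n. sampled_MI R T n0 n) = (\<lambda>n. 1/2 * ln (det (P n)))"
    by (simp add: sampled_MI_def P_def a_def)
  moreover have "(\<lambda>n. 1/2 * ln (det (P n))) \<longlonglongrightarrow> 1/2 * S" by (intro tendsto_mult_left main)
  ultimately show ?thesis using gsum unfolding S_def g_def by simp
qed


end
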